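(* Let $f,g\colon X\to Y$ be continuous maps, let $\pi\colon PY\to Y\times Y$, $\pi(\gamma)=(\gamma(0),\gamma(1))$, be the path fibration, and let $q\colon P\to X$ be the pull-back of $\pi$ along $(f,g)\colon X\to Y\times Y$; that is, $P=\{(x,\gamma)\in X\times PY:\gamma(0)=f(x),\ \gamma(1)=g(x)\}$ and $q(x,\gamma)=x$. Then $\mathrm{D}(f,g)=\mathrm{secat}(q)$.
   Context: $PY$ denotes the space of continuous paths $[0,1]\to Y$ with the compact-open topology. For continuous maps $f,g\colon X\to Y$, the homotopic distance $\mathrm{D}(f,g)$ is the least integer $n\geq 0$ such that there is an open cover $\{U_0,\dots,U_n\}$ of $X$ with $f|_{U_j}\simeq g|_{U_j}$ for all $j$ ($\infty$ if none exists). The Švarc genus (sectional category) $\mathrm{secat}(p)$ of a fibration $p\colon E\to B$ is the least integer $n\geq 0$ such that $B$ is covered by open sets $V_0,\dots,V_n$ over each of which $p$ admits a continuous local section. *)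

theory Defs
  imports "HOL-Analysis.Analysis" "HOL-Library.Extended_Nat"
begin

text \<open>Free path space PY: continuous paths [0,1] -> Y (extensional, i.e. undefined
  outside [0,1], so that paths are determined by their values on [0,1]), with the
  compact-open topology generated by the subbasic sets
  {gamma. gamma ` K \<subseteq> U}, K \<subseteq> [0,1] compact, U open in Y.\<close>
definition path_space :: "'a topology \<Rightarrow> (real \<Rightarrow> 'a) topology" where
  "path_space Y = topology_generated_by
     {{\<gamma>. pathin Y \<gamma> \<and> \<gamma> \<in> extensional {0..1} \<and> \<gamma> ` K \<subseteq> U} | K U.
        compact K \<and> K \<subseteq> {0..1} \<and> openin Y U}"

definition homotopic_distance ::
  "'a topology \<Rightarrow> 'b topology \<Rightarrow> ('a \<Rightarrow> 'b) \<Rightarrow> ('a \<Rightarrow> 'b) \<Rightarrow> enat" where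
  "homotopic_distance X Y f g =
     (INF n \<in> {n::nat. \<exists>U::nat \<Rightarrow> 'a set.
          (\<forall>j\<le>n. openin X (U j)) \<and> (\<Union>j\<le>n. U j) = topspace X \<and>
          (\<forall>j\<le>n. homotopic_with (\<lambda>h. True) (subtopology X (U j)) Y f g)}. enat n)"

definition secat :: "'e topology \<Rightarrow> 'b topology \<Rightarrow> ('e \<Rightarrow> 'b) \<Rightarrow> enat" where
  "secat E B p =
     (INF n \<in> {n::nat. \<exists>V::nat \<Rightarrow> 'b set.
          (\<forall>i\<le>n. openin B (V i)) \<and> (\<Union>i\<le>n. V i) = topspace B \<and>
          (\<forall>i\<le>n. \<exists>s. continuous_map (subtopology B (V i)) E s \<and>
                      (\<forall>x\<in>V i. p (s x) = x))}. enat n)"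

definition pullback_path_space ::
  "'a topology \<Rightarrow> 'b topology \<Rightarrow> ('a \<Rightarrow> 'b) \<Rightarrow> ('a \<Rightarrow> 'b) \<Rightarrow> ('a \<times> (real \<Rightarrow> 'b)) topology" where
  "pullback_path_space X Y f g =
     subtopology (prod_topology X (path_space Y))
       {(x, \<gamma>). x \<in> topspace X \<and> \<gamma> \<in> topspace (path_space Y) \<and> \<gamma> 0 = f x \<and> \<gamma> 1 = g x}"

end

theory Submission
  imports Defs
begin

lemma topspace_path_space:
  "topspace (path_space Y) = {\<gamma>. pathin Y \<gamma> \<and> \<gamma> \<in> extensional {0..1}}"
proof -
  have "{\<gamma>. pathin Y \<gamma> \<and> \<gamma> \<in> extensional {0..1} \<and> \<gamma> ` {} \<subseteq> topspace Y}
     \<in> {{\<gamma>. pathin Y \<gamma> \<and> \<gamma> \<in> extensional {0..1} \<and> \<gamma> ` K \<subseteq> U} | K U.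
        compact K \<and> K \<subseteq> {0..1} \<and> openin Y U}"
    by blast
  then show ?thesis
    unfolding path_space_def topology_generated_by_topspace by auto
qed

lemma subbasic_open:
  assumes "compact K" "K \<subseteq> {0..1}" "openin Y U"
  shows "openin (path_space Y) {\<gamma>. pathin Y \<gamma> \<and> \<gamma> \<in> extensional {0..1} \<and> \<gamma> ` K \<subseteq> U}"
  unfolding path_space_def by (rule topology_generated_by_Basis) (use assms in blast)

lemma eval_cont:
  assumes h: "continuous_map Z (path_space Y) h"
  shows "continuous_map (prod_topology (top_of_set {0..1}) Z) Y (\<lambda>(t,z). h z t)"
proof -
  have hz: "pathin Y (h z) \<and> h z \<in> extensional {0..1}" if "z \<in> topspace Z" for z
    using continuous_map_image_subset_topspace[OF h] that topspace_path_space by blast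
  show ?thesis
    unfolding continuous_map_openin_preimage_eq
  proof (intro conjI allI impI)
    show "(\<lambda>(t,z). h z t) \<in> topspace (prod_topology (top_of_set {0..1}) Z) \<rightarrow> topspace Y"
    proof (clarsimp)
      fix t z assume "z \<in> topspace Z" "0 \<le> t" "t \<le> (1::real)"
      then show "h z t \<in> topspace Y"
        using hz[of z] continuous_map_image_subset_topspace[of "top_of_set {0..1}" Y "h z"]
        by (auto simp: pathin_def)
    qed
  next
    fix W assume W: "openin Y W"
    let ?P = "topspace (prod_topology (top_of_set {0..1}) Z) \<inter> (\<lambda>(t,z). h z t) -` W"
    show "openin (prod_topology (top_of_set {0..1}) Z) ?P"
    proof (subst openin_subopen, intro ballI)
      fix p assume p: "p \<in> ?P"
      obtain t0 z0 where p_eq: "p = (t0, z0)" by (cases p)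
      have t0: "t0 \<in> {0..1}" and z0: "z0 \<in> topspace Z" and hW: "h z0 t0 \<in> W"
        using p p_eq by auto
      have cg: "continuous_map (top_of_set {0..1}) Y (h z0)"
        using hz[OF z0] by (simp add: pathin_def)
      have "openin (top_of_set {0..1}) ({0..1} \<inter> h z0 -` W)"
        using continuous_map_openin_preimage_eq[THEN iffD1, OF cg] W by auto
      then obtain e where e: "e > 0" and eW: "\<And>t. t \<in> {0..1} \<Longrightarrow> dist t t0 < e \<Longrightarrow> h z0 t \<in> W"
        using t0 hW unfolding openin_euclidean_subtopology_iff by blast
      define K where "K = cball t0 (e/2) \<inter> {0..1::real}"
      have Kc: "compact K" unfolding K_def by (simp add: compact_Int_closed)
      have KW: "h z0 ` K \<subseteq> W"
        using eW e by (auto simp: K_def dist_commute)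
      define N where "N = {\<gamma>. pathin Y \<gamma> \<and> \<gamma> \<in> extensional {0..1} \<and> \<gamma> ` K \<subseteq> W}"
      have No: "openin (path_space Y) N"
        unfolding N_def by (rule subbasic_open[OF Kc _ W]) (auto simp: K_def)
      define V where "V = topspace Z \<inter> h -` N"
      have Vo: "openin Z V"
        using continuous_map_openin_preimage_eq[THEN iffD1, OF h] No V_def by blast
      define T where "T = ({0..1} \<inter> ball t0 (e/2)) \<times> V"
      have "openin (top_of_set {0..1}) ({0..1} \<inter> ball t0 (e/2))"
        by (auto intro: openin_open_Int)
      then have To: "openin (prod_topology (top_of_set {0..1}) Z) T"
        unfolding T_def using Vo by (simp add: openin_prod_Times_iff)
      have pT: "p \<in> T"
        using p_eq t0 e z0 hz[OF z0] KW by (auto simp: T_def V_def N_def)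
      have "T \<subseteq> ?P"
      proof
        fix q assume q: "q \<in> T"
        obtain t z where q_eq: "q = (t,z)" by (cases q)
        have "t \<in> K" using q q_eq by (auto simp: T_def K_def)
        moreover have "h z ` K \<subseteq> W" using q q_eq by (auto simp: T_def V_def N_def)
        ultimately have "h z t \<in> W" by blast
        then show "q \<in> ?P" using q q_eq Vo openin_subset by (force simp: T_def V_def)
      qed
      then show "\<exists>T. openin (prod_topology (top_of_set {0..1}) Z) T \<and> p \<in> T \<and> T \<subseteq> ?P"
        using To pT by blast
    qed
  qed
qed


lemma curry_cont:
  assumes H: "continuous_map (prod_topology (top_of_set {0..1}) Z) Y H"
  shows "continuous_map Z (path_space Y) (\<lambda>z. restrict (\<lambda>t. H(t,z)) {0..1})"
proof -
  have pz: "pathin Y (\<lambda>t. H(t,z))" if z: "z \<in> topspace Z" for z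
  proof -
    have "continuous_map (top_of_set {0..1}) (prod_topology (top_of_set {0..1}) Z) (\<lambda>t. (t,z))"
      using z by (simp add: continuous_map_paired)
    then show ?thesis unfolding pathin_def
      using continuous_map_compose[OF _ H] by (simp add: o_def)
  qed
  have pz': "pathin Y (restrict (\<lambda>t. H(t,z)) {0..1})" if z: "z \<in> topspace Z" for z
    using pz[OF z] unfolding pathin_def
    by (rule continuous_map_eq) auto
  let ?F = "(\<lambda>z. restrict (\<lambda>t. H(t,z)) {0..1})"
  show ?thesis
    unfolding path_space_def
  proof (rule continuous_on_generated_topo)
    fix U assume "U \<in> {{\<gamma>. pathin Y \<gamma> \<and> \<gamma> \<in> extensional {0..1} \<and> \<gamma> ` K \<subseteq> W} | K W.
        compact K \<and> K \<subseteq> {0..1} \<and> openin Y W}"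
    then obtain K W where U: "U = {\<gamma>. pathin Y \<gamma> \<and> \<gamma> \<in> extensional {0..1} \<and> \<gamma> ` K \<subseteq> W}"
      and K: "compact K" "K \<subseteq> {0..1}" and W: "openin Y W" by blast
    have eq: "?F -` U \<inter> topspace Z = {z \<in> topspace Z. \<forall>t\<in>K. H(t,z) \<in> W}"
    proof (intro set_eqI iffI)
      fix z assume "z \<in> ?F -` U \<inter> topspace Z"
      then have "z \<in> topspace Z" "?F z \<in> U" by auto
      then have "z \<in> topspace Z" "?F z ` K \<subseteq> W" unfolding U by blast+
      then show "z \<in> {z \<in> topspace Z. \<forall>t\<in>K. H(t,z) \<in> W}"
      proof (intro CollectI conjI ballI)
        fix t assume t: "t \<in> K"
        then have "?F z t \<in> W" using \<open>?F z ` K \<subseteq> W\<close> by blast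
        moreover have "t \<in> {0..1}" using t K(2) by blast
        ultimately show "H(t,z) \<in> W" by simp
      qed simp
    next
      fix z assume "z \<in> {z \<in> topspace Z. \<forall>t\<in>K. H(t,z) \<in> W}"
      then have z: "z \<in> topspace Z" and zK: "\<forall>t\<in>K. H(t,z) \<in> W" by auto
      have "?F z ` K \<subseteq> W"
      proof
        fix y assume "y \<in> ?F z ` K"
        then obtain t where t: "t \<in> K" "y = ?F z t" by blast
        then have "t \<in> {0..1}" using K(2) by blast
        then show "y \<in> W" using t zK by simp
      qed
      moreover have "?F z \<in> extensional {0..1}" by (rule restrict_extensional)
      ultimately have "?F z \<in> U" unfolding U using pz'[OF z] by blast
      then show "z \<in> ?F -` U \<inter> topspace Z" using z by blast
    qed
    let ?W' = "topspace (prod_topology (top_of_set {0..1}) Z) \<inter> H -` W"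
    have W'o: "openin (prod_topology (top_of_set {0..1}) Z) ?W'"
      using continuous_map_openin_preimage_eq[THEN iffD1, OF H] W by blast
    have Kc: "compactin (top_of_set {0..1}) K"
      using K by (simp add: compactin_subtopology compactin_euclidean_iff)
    show "openin Z (?F -` U \<inter> topspace Z)"
      unfolding eq
    proof (subst openin_subopen, intro ballI)
      fix z0 assume z0: "z0 \<in> {z \<in> topspace Z. \<forall>t\<in>K. H(t,z) \<in> W}"
      have "K \<times> {z0} \<subseteq> ?W'" using z0 K(2) by auto
      moreover have "z0 \<in> topspace Z" using z0 by blast
      ultimately obtain U' V where "openin (top_of_set {0..1}) U'" "openin Z V" "K \<subseteq> U'" "z0 \<in> V"
        "U' \<times> V \<subseteq> ?W'"
        using tube_lemma_left[OF W'o Kc] by metis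
      moreover have "V \<subseteq> topspace Z" using \<open>openin Z V\<close> openin_subset by blast
      ultimately have "V \<subseteq> {z \<in> topspace Z. \<forall>t\<in>K. H(t,z) \<in> W}"
      proof (intro subsetI CollectI conjI ballI)
        fix z t assume z: "z \<in> V" and t: "t \<in> K"
        have "(t,z) \<in> U' \<times> V" using z t \<open>K \<subseteq> U'\<close> by blast
        then have "(t,z) \<in> ?W'" by (rule subsetD[OF \<open>U' \<times> V \<subseteq> ?W'\<close>])
        then show "H(t,z) \<in> W" by simp
      qed (use \<open>V \<subseteq> topspace Z\<close> in blast)
      then show "\<exists>T. openin Z T \<and> z0 \<in> T \<and> T \<subseteq> {z \<in> topspace Z. \<forall>t\<in>K. H(t,z) \<in> W}"
        using \<open>openin Z V\<close> \<open>z0 \<in> V\<close> by blast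
    qed
  next
    show "?F ` topspace Z \<subseteq> \<Union> {{\<gamma>. pathin Y \<gamma> \<and> \<gamma> \<in> extensional {0..1} \<and> \<gamma> ` K \<subseteq> W} | K W.
        compact K \<and> K \<subseteq> {0..1} \<and> openin Y W}"
    proof -
      have "\<Union> {{\<gamma>. pathin Y \<gamma> \<and> \<gamma> \<in> extensional {0..1} \<and> \<gamma> ` K \<subseteq> W} | K W.
        compact K \<and> K \<subseteq> {0..1} \<and> openin Y W} = topspace (path_space Y)"
        unfolding path_space_def topology_generated_by_topspace ..
      moreover have "?F ` topspace Z \<subseteq> topspace (path_space Y)"
        unfolding topspace_path_space using pz' restrict_extensional by blast
      ultimately show ?thesis by simp
    qed
  qed
qed


lemma local_equiv:
  assumes f: "continuous_map X Y f" and g: "continuous_map X Y g" and U: "openin X U"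
  shows "homotopic_with (\<lambda>h. True) (subtopology X U) Y f g \<longleftrightarrow>
    (\<exists>s. continuous_map (subtopology X U) (pullback_path_space X Y f g) s \<and> (\<forall>x\<in>U. fst (s x) = x))"
proof
  assume "homotopic_with (\<lambda>h. True) (subtopology X U) Y f g"
  then obtain H where H: "continuous_map (prod_topology (top_of_set {0..1::real}) (subtopology X U)) Y H"
    and H0: "\<And>x. H(0,x) = f x" and H1: "\<And>x. H(1,x) = g x"
    unfolding homotopic_with_def by blast
  define s where "s = (\<lambda>x. (x, restrict (\<lambda>t. H(t,x)) {0..1}))"
  have c2: "continuous_map (subtopology X U) (path_space Y) (\<lambda>x. restrict (\<lambda>t. H(t,x)) {0..1})"
    by (rule curry_cont[OF H])
  have c1: "continuous_map (subtopology X U) X (\<lambda>x. x)"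
    by (simp add: continuous_map_from_subtopology)
  have "continuous_map (subtopology X U) (prod_topology X (path_space Y)) s"
    unfolding s_def using c1 c2 by (simp add: continuous_map_paired)
  moreover have "s ` topspace (subtopology X U) \<subseteq>
     {(x, \<gamma>). x \<in> topspace X \<and> \<gamma> \<in> topspace (path_space Y) \<and> \<gamma> 0 = f x \<and> \<gamma> 1 = g x}"
  proof (rule image_subsetI)
    fix x assume x: "x \<in> topspace (subtopology X U)"
    have "restrict (\<lambda>t. H(t,x)) {0..1} \<in> topspace (path_space Y)"
      using continuous_map_image_subset_topspace[OF c2] x by blast
    then show "s x \<in> {(x, \<gamma>). x \<in> topspace X \<and> \<gamma> \<in> topspace (path_space Y) \<and> \<gamma> 0 = f x \<and> \<gamma> 1 = g x}"
      using x by (auto simp: s_def H0 H1)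
  qed
  ultimately have "continuous_map (subtopology X U) (pullback_path_space X Y f g) s"
    unfolding pullback_path_space_def by (simp add: continuous_map_in_subtopology image_subset_iff_funcset)
  then show "\<exists>s. continuous_map (subtopology X U) (pullback_path_space X Y f g) s \<and> (\<forall>x\<in>U. fst (s x) = x)"
    by (auto simp: s_def)
next
  assume "\<exists>s. continuous_map (subtopology X U) (pullback_path_space X Y f g) s \<and> (\<forall>x\<in>U. fst (s x) = x)"
  then obtain s where s: "continuous_map (subtopology X U) (pullback_path_space X Y f g) s"
    and sf: "\<And>x. x \<in> U \<Longrightarrow> fst (s x) = x" by blast
  have s': "continuous_map (subtopology X U) (prod_topology X (path_space Y)) s"
    and sS: "s ` topspace (subtopology X U) \<subseteq>
     {(x, \<gamma>). x \<in> topspace X \<and> \<gamma> \<in> topspace (path_space Y) \<and> \<gamma> 0 = f x \<and> \<gamma> 1 = g x}"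
    using s unfolding pullback_path_space_def continuous_map_in_subtopology by (simp_all add: image_subset_iff_funcset)
  have "continuous_map (subtopology X U) (path_space Y) (snd \<circ> s)"
    using s' by (simp add: continuous_map_pairwise)
  then have E: "continuous_map (prod_topology (top_of_set {0..1}) (subtopology X U)) Y
      (\<lambda>(t,z). (snd \<circ> s) z t)"
    by (rule eval_cont)
  have pts: "snd (s x) 0 = f x \<and> snd (s x) 1 = g x" if x: "x \<in> topspace (subtopology X U)" for x
  proof -
    obtain a b where ab: "s x = (a,b)" by (cases "s x")
    have "a = x" using sf[of x] x ab by auto
    then show ?thesis using sS x ab by auto
  qed
  define G where "G = (\<lambda>(t::real,x). if t = 0 then f x else if t = 1 then g x else snd (s x) t)"
  have "continuous_map (prod_topology (top_of_set {0..1}) (subtopology X U)) Y G"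
  proof (rule continuous_map_eq[OF E])
    fix p assume "p \<in> topspace (prod_topology (top_of_set {0..1::real}) (subtopology X U))"
    then obtain t x where "p = (t,x)" "x \<in> topspace (subtopology X U)" by auto
    then show "(\<lambda>(t,z). (snd \<circ> s) z t) p = G p" using pts by (auto simp: G_def)
  qed
  then show "homotopic_with (\<lambda>h. True) (subtopology X U) Y f g"
    unfolding homotopic_with_def by (intro exI[of _ G]) (auto simp: G_def)
qed

theorem theorem2p8:
  fixes X :: "'a topology" and Y :: "'b topology" and f g :: "'a \<Rightarrow> 'b"
  assumes "continuous_map X Y f" and "continuous_map X Y g"
  shows "homotopic_distance X Y f g = secat (pullback_path_space X Y f g) X fst"
proof -
  have "{n::nat. \<exists>U::nat \<Rightarrow> 'a set.
          (\<forall>j\<le>n. openin X (U j)) \<and> (\<Union>j\<le>n. U j) = topspace X \<and>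
          (\<forall>j\<le>n. homotopic_with (\<lambda>h. True) (subtopology X (U j)) Y f g)}
      = {n::nat. \<exists>V::nat \<Rightarrow> 'a set.
          (\<forall>i\<le>n. openin X (V i)) \<and> (\<Union>i\<le>n. V i) = topspace X \<and>
          (\<forall>i\<le>n. \<exists>s. continuous_map (subtopology X (V i)) (pullback_path_space X Y f g) s \<and>
                      (\<forall>x\<in>V i. fst (s x) = x))}"
    using local_equiv[OF assms] by (intro Collect_cong ex_cong1) blast
  then show ?thesis unfolding homotopic_distance_def secat_def by simp
qed

end
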